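(* Let $m\ge0$, $n\ge1$, $1\le i\le n$ and $\varepsilon\in\{0,1\}$. There exists a digraph map $\Phi:I_{6m}^{\otimes n}\to|\sqcap^n_{i,\varepsilon}|_{2m}$ whose restriction to $|\sqcap^n_{i,\varepsilon}|_{6m}\subseteq I_{6m}^{\otimes n}$ equals the coordinatewise map $c^{2m}:|\sqcap^n_{i,\varepsilon}|_{6m}\to|\sqcap^n_{i,\varepsilon}|_{2m}$.
   Context: Digraphs: vertex sets with arrows $E\subseteq V^2$ containing the diagonal; digraph maps preserve arrows. Box product $G\otimes H$: arrow $(g,h)\to(g',h')$ iff ($g\to g'$, $h=h'$) or ($g=g'$, $h\to h'$). $I_k$ is the digraph with vertices $\{0,\dots,k\}$ and non-degenerate arrows $2a\to2a+1$ and $2b+2\to2b+1$. For $k\ge0$, $|\sqcap^n_{i,\varepsilon}|_{k}$ denotes the induced subdigraph of $I_k^{\otimes n}$ on the vertices $v=(v_1,\dots,v_n)$ such that either $v_j\in\{0,k\}$ for some $j\ne i$, or $v_i=(1-\varepsilon)k$. The map $c^{2m}:I_{6m}\to I_{2m}$ is $c^{2m}(x)=\min(\max(x-2m,0),2m)$ (a digraph map), applied coordinatewise to $I_{6m}^{\otimes n}\to I_{2m}^{\otimes n}$; it sends $|\sqcap^n_{i,\varepsilon}|_{6m}$ into $|\sqcap^n_{i,\varepsilon}|_{2m}$. *)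

theory Defs
  imports Main
begin

type_synonym 'a digraph = "'a set \<times> ('a \<times> 'a) set"

definition verts :: "'a digraph \<Rightarrow> 'a set" where "verts G = fst G"
definition arrows :: "'a digraph \<Rightarrow> ('a \<times> 'a) set" where "arrows G = snd G"

definition is_digraph :: "'a digraph \<Rightarrow> bool" where
  "is_digraph G \<longleftrightarrow> arrows G \<subseteq> verts G \<times> verts G \<and> (\<forall>v\<in>verts G. (v, v) \<in> arrows G)"

definition digraph_map :: "'a digraph \<Rightarrow> 'b digraph \<Rightarrow> ('a \<Rightarrow> 'b) \<Rightarrow> bool" where
  "digraph_map G H f \<longleftrightarrow> (\<forall>v\<in>verts G. f v \<in> verts H) \<and>
     (\<forall>u v. (u, v) \<in> arrows G \<longrightarrow> (f u, f v) \<in> arrows H)"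

definition induced :: "'a digraph \<Rightarrow> 'a set \<Rightarrow> 'a digraph" where
  "induced G S = (verts G \<inter> S, arrows G \<inter> (S \<times> S))"

definition I_arrow :: "nat \<Rightarrow> nat \<Rightarrow> bool" where
  "I_arrow a b \<longleftrightarrow> a = b \<or> (\<exists>c. a = 2*c \<and> b = 2*c+1) \<or> (\<exists>c. a = 2*c+2 \<and> b = 2*c+1)"

definition I_dg :: "nat \<Rightarrow> nat digraph" where
  "I_dg k = ({0..k}, {(a, b). a \<le> k \<and> b \<le> k \<and> I_arrow a b})"

text \<open>n-fold box product G^{\<otimes>n}, vertices are lists of length n (coordinate j+1 is entry j).
  (u -> v) iff they differ in at most one coordinate j, where u!j -> v!j in G.\<close>
definition box_pow :: "'a digraph \<Rightarrow> nat \<Rightarrow> 'a list digraph" where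
  "box_pow G n =
    ({v. length v = n \<and> set v \<subseteq> verts G},
     {(u, v). length u = n \<and> length v = n \<and> set u \<subseteq> verts G \<and> set v \<subseteq> verts G \<and>
        (\<exists>j<n. (u ! j, v ! j) \<in> arrows G \<and> (\<forall>l<n. l \<noteq> j \<longrightarrow> u ! l = v ! l))})"

text \<open>|\<sqcap>^n_{i,\<epsilon>}|_k, with 1-based index i (so coordinate i is list entry i-1).\<close>
definition sqcap :: "nat \<Rightarrow> nat \<Rightarrow> nat \<Rightarrow> nat \<Rightarrow> nat list digraph" where
  "sqcap n i eps k = induced (box_pow (I_dg k) n)
     {v. (\<exists>j<n. j \<noteq> i - 1 \<and> (v ! j = 0 \<or> v ! j = k)) \<or> v ! (i - 1) = (1 - eps) * k}"

definition cmap :: "nat \<Rightarrow> nat \<Rightarrow> nat" where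
  "cmap m x = nat (min (max (int x - 2 * int m) 0) (2 * int m))"

end

theory Submission
  imports Defs
begin

lemma Iarr: "I_arrow a b \<longleftrightarrow> a = b \<or> (even a \<and> (b = a+1 \<or> a = b+1))"
  unfolding I_arrow_def by (auto elim!: evenE) presburger+

lemma cmap_nat: "cmap m x = min (x - 2*m) (2*m)"
  unfolding cmap_def by (simp add: min_def max_def) linarith

definition phi :: "nat \<Rightarrow> nat \<Rightarrow> nat" where "phi m x = min (min x (6*m - x)) (2*m)"

lemma A2: "I_arrow a b \<Longrightarrow> I_arrow (cmap m a) (cmap m b)"
  unfolding Iarr cmap_nat by (auto simp: min_def)

lemma A3: "I_arrow a b \<Longrightarrow> a \<le> 6*m \<Longrightarrow> b \<le> 6*m \<Longrightarrow> I_arrow (phi m a) (phi m b)"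
  unfolding Iarr phi_def by (auto simp: min_def) presburger+

lemma A4: "I_arrow a b \<Longrightarrow> I_arrow (max c a) (max c b)"
  unfolding Iarr by (auto simp: max_def)

lemma A4': "I_arrow a b \<Longrightarrow> I_arrow (min c a) (min c b)"
  unfolding Iarr by (auto simp: min_def) presburger+

lemma A5: "I_arrow a b \<Longrightarrow> a \<le> 2*m \<Longrightarrow> b \<le> 2*m \<Longrightarrow> I_arrow (2*m - a) (2*m - b)"
  unfolding Iarr by auto

lemma A6: "I_arrow a b \<Longrightarrow> phi m a = phi m b \<or> cmap m a = cmap m b"
  unfolding Iarr phi_def cmap_nat by (auto simp: min_def)

definition hv :: "nat \<Rightarrow> nat \<Rightarrow> nat \<Rightarrow> nat list \<Rightarrow> nat" where
  "hv m n i0 v = Min (insert (2*m) ((\<lambda>j. phi m (v!j)) ` {j. j<n \<and> j \<noteq> i0}))"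

definition FF :: "nat \<Rightarrow> nat \<Rightarrow> nat \<Rightarrow> nat \<Rightarrow> nat" where
  "FF eps m a h = (if eps = 0 then max (cmap m a) h else min (cmap m a) (2*m - h))"

definition Phi :: "nat \<Rightarrow> nat \<Rightarrow> nat \<Rightarrow> nat \<Rightarrow> nat list \<Rightarrow> nat list" where
  "Phi m n i0 eps v = map (\<lambda>j. if j = i0 then FF eps m (v!i0) (hv m n i0 v) else cmap m (v!j)) [0..<n]"

lemma cmap_le: "cmap m x \<le> 2*m" by (simp add: cmap_nat)

lemma hv_le: "hv m n i0 v \<le> 2*m"
  unfolding hv_def by (rule Min_le) auto

lemma hv_zero: "j<n \<Longrightarrow> j \<noteq> i0 \<Longrightarrow> v!j = 0 \<or> v!j = 6*m \<Longrightarrow> hv m n i0 v = 0"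
proof -
  assume a: "j<n" "j \<noteq> i0" "v!j = 0 \<or> v!j = 6*m"
  have "hv m n i0 v \<le> phi m (v!j)" unfolding hv_def by (rule Min_le) (use a in auto)
  moreover have "phi m (v!j) = 0" using a(3) by (auto simp: phi_def)
  ultimately show ?thesis by simp
qed

lemma hv_full: "(\<And>j. j<n \<Longrightarrow> j \<noteq> i0 \<Longrightarrow> 2*m \<le> v!j \<and> v!j \<le> 4*m) \<Longrightarrow> hv m n i0 v = 2*m"
proof -
  assume a: "\<And>j. j<n \<Longrightarrow> j \<noteq> i0 \<Longrightarrow> 2*m \<le> v!j \<and> v!j \<le> 4*m"
  have eq: "insert (2*m) ((\<lambda>j. phi m (v!j)) ` {j. j<n \<and> j \<noteq> i0}) = {2*m}"
  proof (intro equalityI subsetI)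
    fix x assume "x \<in> insert (2*m) ((\<lambda>j. phi m (v!j)) ` {j. j<n \<and> j \<noteq> i0})"
    then obtain j where "x = 2*m \<or> (j<n \<and> j\<noteq>i0 \<and> x = phi m (v!j))" by auto
    then show "x \<in> {2*m}" using a[of j] by (auto simp: phi_def)
  qed auto
  show ?thesis unfolding hv_def eq by simp
qed

lemma hv_cong: "(\<And>j. j<n \<Longrightarrow> j\<noteq>i0 \<Longrightarrow> u!j = v!j) \<Longrightarrow> hv m n i0 u = hv m n i0 v"
  unfolding hv_def by (intro arg_cong[where f=Min] arg_cong[where f="insert _"] image_cong) auto

lemma hv_split:
  assumes "j0<n" "j0 \<noteq> i0" "\<And>l. l<n \<Longrightarrow> l \<noteq> j0 \<Longrightarrow> u!l = v!l"
  shows "\<exists>R. hv m n i0 u = min (phi m (u!j0)) R \<and> hv m n i0 v = min (phi m (v!j0)) R"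
proof -
  let ?S = "{j. j<n \<and> j \<noteq> i0}"
  have S: "\<And>f. f ` ?S = insert (f j0) (f ` (?S - {j0}))" using assms by auto
  have e: "(\<lambda>j. phi m (u!j)) ` (?S - {j0}) = (\<lambda>j. phi m (v!j)) ` (?S - {j0})"
    using assms(3) by (intro image_cong) auto
  let ?R = "Min (insert (2*m) ((\<lambda>j. phi m (v!j)) ` (?S - {j0})))"
  have "hv m n i0 u = Min (insert (phi m (u!j0)) (insert (2*m) ((\<lambda>j. phi m (u!j)) ` (?S - {j0}))))"
    unfolding hv_def by (simp only: S insert_commute)
  also have "\<dots> = min (phi m (u!j0)) ?R" by (subst Min_insert) (auto simp: e)
  finally have 1: "hv m n i0 u = min (phi m (u!j0)) ?R" .
  have "hv m n i0 v = Min (insert (phi m (v!j0)) (insert (2*m) ((\<lambda>j. phi m (v!j)) ` (?S - {j0}))))"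
    unfolding hv_def by (simp only: S insert_commute)
  also have "\<dots> = min (phi m (v!j0)) ?R" by (subst Min_insert) auto
  finally show ?thesis using 1 by blast
qed

lemma FF_le: "h \<le> 2*m \<Longrightarrow> FF eps m a h \<le> 2*m"
  unfolding FF_def using cmap_le[of m a] by auto

lemma FF_arr1: "I_arrow a b \<Longrightarrow> I_arrow (FF eps m a h) (FF eps m b h)"
  unfolding FF_def using A2[of a b m] A4[of "cmap m a" "cmap m b" h] A4'[of "cmap m a" "cmap m b" "2*m-h"]
  by (auto simp: max.commute min.commute)

lemma FF_arr2: "I_arrow h h' \<Longrightarrow> h \<le> 2*m \<Longrightarrow> h' \<le> 2*m \<Longrightarrow> I_arrow (FF eps m a h) (FF eps m a h')"
  unfolding FF_def using A5[of h h' m] A4 A4' by auto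

lemma Phi_len[simp]: "length (Phi m n i0 eps v) = n" by (simp add: Phi_def)

lemma Phi_nth: "j < n \<Longrightarrow> Phi m n i0 eps v ! j =
   (if j = i0 then FF eps m (v!i0) (hv m n i0 v) else cmap m (v!j))"
  by (simp add: Phi_def)

lemma Phi_bound: "x \<in> set (Phi m n i0 eps v) \<Longrightarrow> x \<le> 2*m"
  using FF_le[OF hv_le] cmap_le by (auto simp: Phi_def)

lemma Phi_cond:
  assumes "i0 < n" "eps \<in> {0,1}" "\<forall>x\<in>set v. x \<le> 6*m" "length v = n"
  shows "(\<exists>j<n. j \<noteq> i0 \<and> (Phi m n i0 eps v ! j = 0 \<or> Phi m n i0 eps v ! j = 2*m))
     \<or> Phi m n i0 eps v ! i0 = (1 - eps) * (2*m)"
proof (cases "\<exists>j<n. j \<noteq> i0 \<and> (v!j \<le> 2*m \<or> 4*m \<le> v!j)")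
  case True
  then obtain j where j: "j<n" "j\<noteq>i0" "v!j \<le> 2*m \<or> 4*m \<le> v!j" by blast
  have "v!j \<le> 6*m" using assms(3,4) j(1) by auto
  then have "cmap m (v!j) = 0 \<or> cmap m (v!j) = 2*m" using j(3) by (auto simp: cmap_nat)
  then show ?thesis using j by (auto simp: Phi_nth)
next
  case False
  then have "hv m n i0 v = 2*m" by (intro hv_full) auto
  then show ?thesis using assms(1,2) cmap_le[of m "v!i0"] by (auto simp: Phi_nth FF_def)
qed

lemma Phi_arrow:
  assumes "length u = n" "length v = n" "\<forall>x\<in>set u. x \<le> 6*m" "\<forall>x\<in>set v. x \<le> 6*m"
    "j<n" "I_arrow (u!j) (v!j)" "\<forall>l<n. l \<noteq> j \<longrightarrow> u!l = v!l" "i0 < n"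
  shows "\<exists>j<n. I_arrow (Phi m n i0 eps u ! j) (Phi m n i0 eps v ! j) \<and>
     (\<forall>l<n. l \<noteq> j \<longrightarrow> Phi m n i0 eps u ! l = Phi m n i0 eps v ! l)"
proof (cases "j = i0")
  case True
  have h: "hv m n i0 u = hv m n i0 v" using assms(7) True by (intro hv_cong) auto
  show ?thesis
    by (rule exI[of _ j]) (use assms True h FF_arr1 in \<open>auto simp: Phi_nth\<close>)
next
  case False
  have uj: "u!j \<le> 6*m" "v!j \<le> 6*m" using assms by auto
  obtain R where R: "hv m n i0 u = min (phi m (u!j)) R" "hv m n i0 v = min (phi m (v!j)) R"
    using hv_split[of j n i0 u v m] assms False by auto
  show ?thesis
  proof (cases "phi m (u!j) = phi m (v!j)")
    case True
    then have h: "hv m n i0 u = hv m n i0 v" using R by simp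
    show ?thesis
      by (rule exI[of _ j]) (use assms False h A2 in \<open>auto simp: Phi_nth\<close>)
  next
    case F2: False
    then have c: "cmap m (u!j) = cmap m (v!j)" using A6[OF assms(6)] by auto
    have "I_arrow (phi m (u!j)) (phi m (v!j))" using A3[OF assms(6) uj] .
    then have ha: "I_arrow (hv m n i0 u) (hv m n i0 v)" using R A4'[of "phi m (u!j)" "phi m (v!j)" R]
      by (simp add: min.commute)
    have f: "I_arrow (FF eps m (u!i0) (hv m n i0 u)) (FF eps m (u!i0) (hv m n i0 v))"
      by (rule FF_arr2[OF ha hv_le hv_le])
    show ?thesis
    proof (rule exI[of _ i0], intro conjI allI impI)
      show "I_arrow (Phi m n i0 eps u ! i0) (Phi m n i0 eps v ! i0)"
        using f assms(7,8) False by (simp add: Phi_nth)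
      fix l assume "l<n" "l \<noteq> i0"
      then show "Phi m n i0 eps u ! l = Phi m n i0 eps v ! l"
        using assms(7) c by (cases "l = j") (auto simp: Phi_nth)
    qed (use assms in auto)
  qed
qed

theorem mainTheorem10:
  fixes m n i eps :: nat
  assumes "n \<ge> 1" and "1 \<le> i" and "i \<le> n" and "eps \<in> {0, 1}"
  shows "\<exists>\<Phi>. digraph_map (box_pow (I_dg (6 * m)) n) (sqcap n i eps (2 * m)) \<Phi> \<and>
           (\<forall>v\<in>verts (sqcap n i eps (6 * m)). \<Phi> v = map (cmap m) v)"
proof (rule exI[of _ "Phi m n (i - 1) eps"], intro conjI ballI)
  have i0: "i - 1 < n" using assms by auto
  show "digraph_map (box_pow (I_dg (6 * m)) n) (sqcap n i eps (2 * m)) (Phi m n (i - 1) eps)"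
    unfolding digraph_map_def
  proof (intro conjI allI ballI impI)
    fix v assume "v \<in> verts (box_pow (I_dg (6 * m)) n)"
    then have v: "length v = n" "\<forall>x\<in>set v. x \<le> 6*m"
      by (auto simp: box_pow_def verts_def I_dg_def)
    show "Phi m n (i - 1) eps v \<in> verts (sqcap n i eps (2 * m))"
      using Phi_cond[OF i0 assms(4) v(2,1)] Phi_bound
      by (auto simp: sqcap_def induced_def box_pow_def verts_def I_dg_def arrows_def)
  next
    fix u v assume "(u, v) \<in> arrows (box_pow (I_dg (6 * m)) n)"
    then obtain j where uv: "length u = n" "length v = n" "\<forall>x\<in>set u. x \<le> 6*m" "\<forall>x\<in>set v. x \<le> 6*m"
      "j<n" "I_arrow (u!j) (v!j)" "\<forall>l<n. l \<noteq> j \<longrightarrow> u!l = v!l"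
      by (auto simp: box_pow_def verts_def I_dg_def arrows_def subset_iff)
    obtain j' where j': "j'<n" "I_arrow (Phi m n (i - 1) eps u ! j') (Phi m n (i - 1) eps v ! j')"
      "\<forall>l<n. l \<noteq> j' \<longrightarrow> Phi m n (i - 1) eps u ! l = Phi m n (i - 1) eps v ! l"
      using Phi_arrow[OF uv i0] by blast
    have b: "Phi m n (i - 1) eps u ! j' \<le> 2*m" "Phi m n (i - 1) eps v ! j' \<le> 2*m"
      using Phi_bound j'(1) by (metis Phi_len nth_mem)+
    show "(Phi m n (i - 1) eps u, Phi m n (i - 1) eps v) \<in> arrows (sqcap n i eps (2 * m))"
      using Phi_cond[OF i0 assms(4) uv(3,1)] Phi_cond[OF i0 assms(4) uv(4,2)] Phi_bound j' b
      by (auto simp: sqcap_def induced_def box_pow_def verts_def I_dg_def arrows_def subset_iff)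
  qed
next
  fix v assume "v \<in> verts (sqcap n i eps (6 * m))"
  then have v: "length v = n" "\<forall>x\<in>set v. x \<le> 6*m"
    "(\<exists>j<n. j \<noteq> i - 1 \<and> (v ! j = 0 \<or> v ! j = 6*m)) \<or> v ! (i - 1) = (1 - eps) * (6*m)"
    by (auto simp: sqcap_def induced_def box_pow_def verts_def I_dg_def subset_iff)
  have "FF eps m (v!(i-1)) (hv m n (i-1) v) = cmap m (v!(i-1))"
  proof (cases "\<exists>j<n. j \<noteq> i - 1 \<and> (v ! j = 0 \<or> v ! j = 6*m)")
    case True
    then obtain j where "j<n" "j \<noteq> i - 1" "v ! j = 0 \<or> v ! j = 6*m" by blast
    then have "hv m n (i-1) v = 0" by (rule hv_zero)
    then show ?thesis using cmap_le[of m] by (simp add: FF_def min_def)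
  next
    case False
    then have "v ! (i - 1) = (1 - eps) * (6*m)" using v(3) by blast
    then show ?thesis using assms(4) hv_le[of m n "i-1" v] by (auto simp: FF_def cmap_nat)
  qed
  then show "Phi m n (i - 1) eps v = map (cmap m) v"
    using v(1) by (intro nth_equalityI) (auto simp: Phi_nth)
qed

end
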